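(* Let $Y^*\in\mathcal L^1(\mathcal Q)$ and let the range $\{\mu_{\mathcal Q}(A)\mid A\in\mathcal F\}$ be relatively compact in $(l^\infty(\mathcal Q),\|\cdot\|_\infty)$. If $\rho_{\mathcal Q}(Y^*\mathbb 1_{\{Y^*>a\}})\to0$ as $a\to\infty$, then $\rho_{\mathcal Q}$ is continuous from above at $0$.
   Context: Let $(\Omega,\mathcal F,\mathrm P)$ be a probability space (equipped with a filtration $(\mathcal F_t)_{0\le t\le T}$, $\mathcal F=\mathcal F_T$). $\mathcal Q$ is a nonempty set of probability measures on $\mathcal F$, each absolutely continuous w.r.t. $\mathrm P$. $\mathcal L^1(\mathcal Q)$ is the set of random variables $X$ with $\sup_{\mathrm Q\in\mathcal Q}\mathbb E_{\mathrm Q}[|X|]<\infty$. $Y=(Y_t)_{0\le t\le T}$ is a right-continuous adapted process with bounded paths and $Y^*:=\sup_{t\in[0,T]}|Y_t|$. $\mathcal X$ is the set of random variables $X$ with $|X|\le C(Y^*+1)$ $\mathrm P$-a.s. for some $C>0$; $\rho_{\mathcal Q}(X)=\sup_{\mathrm Q\in\mathcal Q}\mathbb E_{\mathrm Q}[X]$ for $X\in\mathcal X$; $\rho_{\mathcal Q}$ is continuous from above at $0$ if $\rho_{\mathcal Q}(X_n)\searrow0$ whenever $X_n\in\mathcal X$, $X_n\searrow0$ $\mathrm P$-a.s. $l^\infty(\mathcal Q)$ is the space of bounded real functions on $\mathcal Q$ with sup-norm, and $\mu_{\mathcal Q}(A)(\mathrm Q)=\mathrm Q(A)$ for $A\in\mathcal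 F$. *)

theory Defs
  imports "HOL-Probability.Probability"
begin

definition Ystar :: "real \<Rightarrow> (real \<Rightarrow> 'a \<Rightarrow> real) \<Rightarrow> 'a \<Rightarrow> real" where
  "Ystar T Y \<omega> = (SUP t\<in>{0..T}. \<bar>Y t \<omega>\<bar>)"

definition L1Q :: "'a measure \<Rightarrow> 'a measure set \<Rightarrow> ('a \<Rightarrow> real) set" where
  "L1Q M Qs = {X. X \<in> borel_measurable M \<and>
                 (SUP Q\<in>Qs. \<integral>\<^sup>+ \<omega>. ennreal \<bar>X \<omega>\<bar> \<partial>Q) < \<infinity>}"

definition calX :: "'a measure \<Rightarrow> ('a \<Rightarrow> real) \<Rightarrow> ('a \<Rightarrow> real) set" where
  "calX M Ys = {X. X \<in> borel_measurable M \<and>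
                  (\<exists>C>0. AE \<omega> in M. \<bar>X \<omega>\<bar> \<le> C * (Ys \<omega> + 1))}"

definition rhoQ :: "'a measure set \<Rightarrow> ('a \<Rightarrow> real) \<Rightarrow> real" where
  "rhoQ Qs X = (SUP Q\<in>Qs. integral\<^sup>L Q X)"

definition cont_from_above_at_0 :: "'a measure \<Rightarrow> ('a \<Rightarrow> real) \<Rightarrow> 'a measure set \<Rightarrow> bool" where
  "cont_from_above_at_0 M Ys Qs \<longleftrightarrow>
     (\<forall>Xs :: nat \<Rightarrow> 'a \<Rightarrow> real.
        (\<forall>n. Xs n \<in> calX M Ys) \<and>
        (AE \<omega> in M. decseq (\<lambda>n. Xs n \<omega>) \<and> (\<lambda>n. Xs n \<omega>) \<longlonglongrightarrow> 0)
        \<longrightarrow> decseq (\<lambda>n. rhoQ Qs (Xs n)) \<and> (\<lambda>n. rhoQ Qs (Xs n)) \<longlonglongrightarrow> 0)"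

text \<open>l^infinity(Q) with the sup-norm: bounded real functions on Qs
  (extensional on Qs), with the uniform metric.\<close>
definition linfty :: "'a measure set \<Rightarrow> ('a measure \<Rightarrow> real) metric" where
  "linfty Qs = funspace Qs euclidean_metric"

definition muQ :: "'a measure set \<Rightarrow> 'a set \<Rightarrow> 'a measure \<Rightarrow> real" where
  "muQ Qs A = restrict (\<lambda>Q. measure Q A) Qs"

definition relatively_compact_in :: "'b metric \<Rightarrow> 'b set \<Rightarrow> bool" where
  "relatively_compact_in m S \<longleftrightarrow>
     S \<subseteq> mspace m \<and> compactin (mtopology_of m) (mtopology_of m closure_of S)"

end

theory Submission
  imports Defs
begin


lemma unif_decseq:
  fixes M :: "'a measure" and Qs :: "'a measure set" and A :: "nat \<Rightarrow> 'a set"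
  assumes Q_prob: "\<And>Q. Q \<in> Qs \<Longrightarrow> prob_space Q"
    and Q_sets: "\<And>Q. Q \<in> Qs \<Longrightarrow> sets Q = sets M"
    and Q_ac: "\<And>Q. Q \<in> Qs \<Longrightarrow> absolutely_continuous M Q"
    and rel_compact: "relatively_compact_in (linfty Qs) {muQ Qs A | A. A \<in> sets M}"
    and A: "range A \<subseteq> sets M" "decseq A" "(\<Inter>i. A i) \<in> null_sets M"
    and e: "e > 0"
  shows "\<exists>k. \<forall>Q\<in>Qs. measure Q (A k) < e"
proof (rule ccontr)
  assume "\<not> ?thesis"
  then have ex: "\<forall>k. \<exists>Q\<in>Qs. measure Q (A k) \<ge> e" by (auto simp: not_less)
  interpret L: Metric_space "mspace (linfty Qs)" "mdist (linfty Qs)"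
    by (rule Metric_space_mspace_mdist)
  have R: "Metric_space (UNIV::real set) dist"
    by (rule Metric_space_mspace_mdist[of euclidean_metric, simplified])
  define S where "S = {muQ Qs A | A. A \<in> sets M}"
  define \<sigma> where "\<sigma> k = muQ Qs (A k)" for k
  have mt: "mtopology_of (linfty Qs) = L.mtopology" by (simp add: mtopology_of_def)
  have SM: "S \<subseteq> mspace (linfty Qs)" and cpt: "compactin L.mtopology (L.mtopology closure_of S)"
    using rel_compact by (auto simp: relatively_compact_in_def S_def mt)
  have "range \<sigma> \<subseteq> S" using A(1) by (auto simp: \<sigma>_def S_def)
  also have "S \<subseteq> L.mtopology closure_of S"
    by (rule closure_of_subset) (use SM in simp)
  finally have rs: "range \<sigma> \<subseteq> L.mtopology closure_of S" .
  obtain l r where l: "l \<in> L.mtopology closure_of S" and r: "strict_mono r"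
    and lim: "limitin L.mtopology (\<sigma> \<circ> r) l sequentially"
    using cpt rs unfolding L.compactin_sequentially by blast
  have lM: "l \<in> mspace (linfty Qs)" using L.limitin_mspace[OF lim] .
  have \<sigma>M: "\<sigma> k \<in> mspace (linfty Qs)" for k using rs SM closure_of_subset_topspace by fastforce
  have ev: "eventually (\<lambda>j. mdist (linfty Qs) (\<sigma> (r j)) l < e/4) sequentially"
  proof -
    have "\<forall>\<epsilon>>0. eventually (\<lambda>x. (\<sigma> \<circ> r) x \<in> mspace (linfty Qs) \<and> mdist (linfty Qs) ((\<sigma> \<circ> r) x) l < \<epsilon>) sequentially"
      using lim unfolding L.limitin_metric by blast
    then have "eventually (\<lambda>x. (\<sigma> \<circ> r) x \<in> mspace (linfty Qs) \<and> mdist (linfty Qs) ((\<sigma> \<circ> r) x) l < e/4) sequentially"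
    proof -
      have "e/4 > 0" using e by simp
      then show ?thesis using \<open>\<forall>\<epsilon>>0. _\<close> by blast
    qed
    then show ?thesis by (rule eventually_mono) simp
  qed
  have ptw: "\<forall>Q\<in>Qs. dist (\<sigma> (r j) Q) (l Q) \<le> e/4"
    if "mdist (linfty Qs) (\<sigma> (r j)) l < e/4" for j
  proof (cases "Qs = {}")
    case True then show ?thesis by simp
  next
    case False
    have "Metric_space.fdist (UNIV::real set) dist Qs (\<sigma> (r j)) l \<le> e/4" using that by (simp add: linfty_def)
    then show ?thesis
      using Metric_space.funspace_mdist_le[OF R, of "\<sigma> (r j)" Qs l "e/4"] \<sigma>M lM False
      by (simp add: linfty_def)
  qed
  have sQ: "\<sigma> k Q = measure Q (A k)" if "Q \<in> Qs" for k Q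
    using that by (simp add: \<sigma>_def muQ_def)
  have conv: "(\<lambda>k. measure Q (A k)) \<longlonglongrightarrow> 0" if Q: "Q \<in> Qs" for Q
  proof -
    interpret Qp: prob_space Q using Q_prob[OF Q] .
    have "(\<lambda>k. measure Q (A k)) \<longlonglongrightarrow> measure Q (\<Inter>i. A i)"
      by (rule Qp.finite_Lim_measure_decseq) (use A Q_sets[OF Q] in auto)
    moreover have "(\<Inter>i. A i) \<in> null_sets Q"
      using A(3) Q_ac[OF Q] by (auto simp: absolutely_continuous_def)
    ultimately show ?thesis by (simp add: null_setsD1 measure_def)
  qed
  have lQ: "dist 0 (l Q) \<le> e/4" if Q: "Q \<in> Qs" for Q
  proof -
    have "(\<lambda>j. \<sigma> (r j) Q) \<longlonglongrightarrow> 0"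
      using LIMSEQ_subseq_LIMSEQ[OF conv[OF Q] r] sQ[OF Q] by (simp add: o_def)
    then have "(\<lambda>j. dist (\<sigma> (r j) Q) (l Q)) \<longlonglongrightarrow> dist 0 (l Q)"
      by (intro tendsto_intros)
    moreover have "eventually (\<lambda>j. dist (\<sigma> (r j) Q) (l Q) \<le> e/4) sequentially"
      using ev by (rule eventually_mono) (use ptw Q in blast)
    ultimately show ?thesis by (rule tendsto_upperbound) simp
  qed
  obtain j where j: "mdist (linfty Qs) (\<sigma> (r j)) l < e/4"
    using ev by (meson eventually_sequentially order_refl)
  obtain Q where Q: "Q \<in> Qs" "measure Q (A (r j)) \<ge> e" using ex by blast
  have "dist (\<sigma> (r j) Q) (l Q) \<le> e/4" using ptw[OF j] Q by blast
  with lQ[OF Q(1)] sQ[OF Q(1)] Q(2) e show False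
    by (simp add: dist_real_def)
qed



theorem lemma6p8:
  fixes M :: "'a measure" and Fil :: "real \<Rightarrow> 'a measure" and T :: real
    and Qs :: "'a measure set" and Y :: "real \<Rightarrow> 'a \<Rightarrow> real"
  assumes P: "prob_space M"
    and filt_sub: "\<And>t. t \<in> {0..T} \<Longrightarrow> subalgebra M (Fil t)"
    and filt_mono: "\<And>s t. 0 \<le> s \<Longrightarrow> s \<le> t \<Longrightarrow> t \<le> T \<Longrightarrow> sets (Fil s) \<subseteq> sets (Fil t)"
    and filt_T: "sets (Fil T) = sets M"
    and Q_ne: "Qs \<noteq> {}"
    and Q_prob: "\<And>Q. Q \<in> Qs \<Longrightarrow> prob_space Q"
    and Q_sets: "\<And>Q. Q \<in> Qs \<Longrightarrow> sets Q = sets M"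
    and Q_ac: "\<And>Q. Q \<in> Qs \<Longrightarrow> absolutely_continuous M Q"
    and Y_adapted: "\<And>t. t \<in> {0..T} \<Longrightarrow> Y t \<in> borel_measurable (Fil t)"
    and Y_rc: "\<And>\<omega> t. \<omega> \<in> space M \<Longrightarrow> t \<in> {0..T} \<Longrightarrow>
                  ((\<lambda>s. Y s \<omega>) \<longlongrightarrow> Y t \<omega>) (at t within {t<..T})"
    and Y_bdd: "\<And>\<omega>. \<omega> \<in> space M \<Longrightarrow> \<exists>B. \<forall>t\<in>{0..T}. \<bar>Y t \<omega>\<bar> \<le> B"
    and Ystar_L1: "Ystar T Y \<in> L1Q M Qs"
    and rel_compact: "relatively_compact_in (linfty Qs) {muQ Qs A | A. A \<in> sets M}"
    and UI: "((\<lambda>a. rhoQ Qs (\<lambda>\<omega>. Ystar T Y \<omega> * indicator {\<omega>. Ystar T Y \<omega> > a} \<omega>))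
               \<longlongrightarrow> 0) at_top"
  shows "cont_from_above_at_0 M (Ystar T Y) Qs"
proof -
  define Z where "Z = Ystar T Y"
  have Zm: "Z \<in> borel_measurable M" using Ystar_L1 by (simp add: L1Q_def Z_def)
  have ZmQ: "Z \<in> borel_measurable Q" if "Q \<in> Qs" for Q
    using Zm by (subst measurable_cong_sets[OF Q_sets[OF that] refl])
  define B where "B = (SUP Q\<in>Qs. \<integral>\<^sup>+ \<omega>. ennreal \<bar>Z \<omega>\<bar> \<partial>Q)"
  have Bfin: "B < \<infinity>" using Ystar_L1 by (simp add: L1Q_def Z_def B_def)
  define K where "K = enn2real B"
  have nnQ: "(\<integral>\<^sup>+ \<omega>. ennreal \<bar>Z \<omega>\<bar> \<partial>Q) \<le> B" if "Q \<in> Qs" for Q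
    unfolding B_def using that by (rule SUP_upper)
  have ZintQ: "integrable Q Z" if "Q \<in> Qs" for Q
    using nnQ[OF that] Bfin by (intro integrableI_bounded[OF ZmQ[OF that]]) auto
  have absK: "(\<integral>\<omega>. \<bar>Z \<omega>\<bar> \<partial>Q) \<le> K" if Q: "Q \<in> Qs" for Q
  proof -
    have "(\<integral>\<omega>. \<bar>Z \<omega>\<bar> \<partial>Q) = enn2real (\<integral>\<^sup>+ \<omega>. ennreal \<bar>Z \<omega>\<bar> \<partial>Q)"
      by (rule integral_eq_nn_integral) (use ZmQ[OF Q] in auto)
    also have "\<dots> \<le> K" unfolding K_def using nnQ[OF Q] Bfin by (intro enn2real_mono) auto
    finally show ?thesis .
  qed
  show ?thesis unfolding cont_from_above_at_0_def Z_def[symmetric]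
  proof (intro allI impI)
    fix Xs :: "nat \<Rightarrow> 'a \<Rightarrow> real"
    assume H: "(\<forall>n. Xs n \<in> calX M Z) \<and>
        (AE \<omega> in M. decseq (\<lambda>n. Xs n \<omega>) \<and> (\<lambda>n. Xs n \<omega>) \<longlonglongrightarrow> 0)"
    have Xm: "Xs n \<in> borel_measurable M" for n using H by (simp add: calX_def)
    have XmQ: "Xs n \<in> borel_measurable Q" if "Q \<in> Qs" for n Q
      using Xm by (subst measurable_cong_sets[OF Q_sets[OF that] refl])
    have "\<forall>n. \<exists>C>0. AE \<omega> in M. \<bar>Xs n \<omega>\<bar> \<le> C * (Z \<omega> + 1)" using H by (simp add: calX_def)
    then obtain Cf where Cf: "\<And>n. Cf n > 0" "\<And>n. AE \<omega> in M. \<bar>Xs n \<omega>\<bar> \<le> Cf n * (Z \<omega> + 1)"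
      by metis
    have AEM: "AE \<omega> in M. decseq (\<lambda>n. Xs n \<omega>) \<and> (\<lambda>n. Xs n \<omega>) \<longlonglongrightarrow> 0 \<and>
                 (\<forall>n. \<bar>Xs n \<omega>\<bar> \<le> Cf n * (Z \<omega> + 1))"
      using H Cf(2) by (auto simp: AE_all_countable)
    have AEQ: "AE \<omega> in Q. decseq (\<lambda>n. Xs n \<omega>) \<and> (\<lambda>n. Xs n \<omega>) \<longlonglongrightarrow> 0 \<and>
                 (\<forall>n. \<bar>Xs n \<omega>\<bar> \<le> Cf n * (Z \<omega> + 1))" if Q: "Q \<in> Qs" for Q
      by (rule absolutely_continuous_AE[OF Q_sets[OF Q] Q_ac[OF Q] AEM])
    have AEQ2: "AE \<omega> in Q. (\<forall>n. 0 \<le> Xs n \<omega>) \<and> (\<forall>n m. n \<le> m \<longrightarrow> Xs m \<omega> \<le> Xs n \<omega>)"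
      if Q: "Q \<in> Qs" for Q
      using AEQ[OF Q]
    proof eventually_elim
      case (elim \<omega>)
      then have d: "decseq (\<lambda>n. Xs n \<omega>)" and l: "(\<lambda>n. Xs n \<omega>) \<longlonglongrightarrow> 0" by auto
      show ?case using decseq_ge[OF d l] decseqD[OF d] by simp
    qed
    have ZleK: "(\<integral>\<omega>. Z \<omega> \<partial>Q) \<le> K" if Q: "Q \<in> Qs" for Q
      using integral_mono[OF ZintQ[OF Q] integrable_abs[OF ZintQ[OF Q]], of] absK[OF Q] by force
    have XintQ: "integrable Q (Xs n)" if Q: "Q \<in> Qs" for n Q
    proof -
      interpret Qp: prob_space Q using Q_prob[OF Q] .
      have i: "integrable Q (\<lambda>\<omega>. Cf n * (Z \<omega> + 1))"
        using ZintQ[OF Q] by auto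
      show ?thesis
      proof (rule Bochner_Integration.integrable_bound[OF i XmQ[OF Q]])
        show "AE \<omega> in Q. norm (Xs n \<omega>) \<le> norm (Cf n * (Z \<omega> + 1))"
          using AEQ[OF Q] by eventually_elim (metis abs_ge_self order_trans real_norm_def)
      qed
    qed
    have XleK: "(\<integral>\<omega>. Xs n \<omega> \<partial>Q) \<le> Cf n * (K + 1)" if Q: "Q \<in> Qs" for n Q
    proof -
      interpret Qp: prob_space Q using Q_prob[OF Q] .
      have i: "integrable Q (\<lambda>\<omega>. Cf n * (Z \<omega> + 1))"
        using ZintQ[OF Q] by auto
      have "(\<integral>\<omega>. Xs n \<omega> \<partial>Q) \<le> (\<integral>\<omega>. Cf n * (Z \<omega> + 1) \<partial>Q)"
      proof (rule integral_mono_AE[OF XintQ[OF Q] i])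
        show "AE \<omega> in Q. Xs n \<omega> \<le> Cf n * (Z \<omega> + 1)"
          using AEQ[OF Q] by eventually_elim (metis abs_ge_self order_trans)
      qed
      also have "\<dots> = Cf n * ((\<integral>\<omega>. Z \<omega> \<partial>Q) + 1)"
        using ZintQ[OF Q] by (simp add: Qp.prob_space)
      also have "\<dots> \<le> Cf n * (K + 1)" using ZleK[OF Q] Cf(1)[of n] by simp
      finally show ?thesis .
    qed
    have bddX: "bdd_above ((\<lambda>Q. \<integral>\<omega>. Xs n \<omega> \<partial>Q) ` Qs)" for n
      using XleK by (auto intro!: bdd_aboveI2)
    have XnonnegQ: "0 \<le> (\<integral>\<omega>. Xs n \<omega> \<partial>Q)" if Q: "Q \<in> Qs" for n Q
      by (rule integral_nonneg_AE) (use AEQ2[OF Q] in auto)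
    have dec: "decseq (\<lambda>n. rhoQ Qs (Xs n))"
      unfolding decseq_def rhoQ_def
    proof (intro allI impI)
      fix n m :: nat assume nm: "n \<le> m"
      show "(SUP Q\<in>Qs. \<integral>\<omega>. Xs m \<omega> \<partial>Q) \<le> (SUP Q\<in>Qs. \<integral>\<omega>. Xs n \<omega> \<partial>Q)"
      proof (rule cSUP_mono[OF Q_ne bddX])
        fix Q assume Q: "Q \<in> Qs"
        have "(\<integral>\<omega>. Xs m \<omega> \<partial>Q) \<le> (\<integral>\<omega>. Xs n \<omega> \<partial>Q)"
          by (rule integral_mono_AE[OF XintQ[OF Q] XintQ[OF Q]])
             (use AEQ2[OF Q] nm in auto)
        then show "\<exists>Q'\<in>Qs. (\<integral>\<omega>. Xs m \<omega> \<partial>Q) \<le> (\<integral>\<omega>. Xs n \<omega> \<partial>Q')" using Q by blast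
      qed
    qed
    have key: "\<exists>n0. \<forall>n\<ge>n0. \<bar>rhoQ Qs (Xs n)\<bar> \<le> e" if e: "e > 0" for e
    proof -
      define C where "C = Cf 0"
      have C: "C > 0" using Cf(1) by (simp add: C_def)
      define W where "W a = (\<lambda>\<omega>. if a < Z \<omega> then Z \<omega> else 0)" for a
      have Weq: "(\<lambda>\<omega>. Z \<omega> * indicator {\<omega>. Z \<omega> > a} \<omega>) = W a" for a
        by (auto simp: W_def indicator_def fun_eq_iff)
      have UI': "((\<lambda>a. rhoQ Qs (W a)) \<longlongrightarrow> 0) at_top"
        using UI unfolding Z_def[symmetric] Weq .
      have "eventually (\<lambda>a. dist (rhoQ Qs (W a)) 0 < e/(6*C)) at_top"
        using tendstoD[OF UI'] e C by simp
      then obtain N where N: "\<And>a. a \<ge> N \<Longrightarrow> dist (rhoQ Qs (W a)) 0 < e/(6*C)"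
        by (auto simp: eventually_at_top_linorder)
      define a where "a = max N 1"
      have a1: "a \<ge> 1" by (simp add: a_def)
      have rhoW: "rhoQ Qs (W a) < e/(6*C)" using N[of a] by (simp add: a_def dist_real_def)
      have WmQ: "W a \<in> borel_measurable Q" if Q: "Q \<in> Qs" for Q
        unfolding W_def using ZmQ[OF Q] by measurable
      have WintQ: "integrable Q (W a)" if Q: "Q \<in> Qs" for Q
        by (rule Bochner_Integration.integrable_bound[OF ZintQ[OF Q] WmQ[OF Q]]) (auto simp: W_def)
      have WleK: "(\<integral>\<omega>. W a \<omega> \<partial>Q) \<le> K" if Q: "Q \<in> Qs" for Q
      proof -
        have "(\<integral>\<omega>. W a \<omega> \<partial>Q) \<le> (\<integral>\<omega>. \<bar>Z \<omega>\<bar> \<partial>Q)"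
          by (rule integral_mono[OF WintQ[OF Q] integrable_abs[OF ZintQ[OF Q]]]) (auto simp: W_def)
        then show ?thesis using absK[OF Q] by simp
      qed
      have Wrho: "(\<integral>\<omega>. W a \<omega> \<partial>Q) \<le> rhoQ Qs (W a)" if Q: "Q \<in> Qs" for Q
        unfolding rhoQ_def by (rule cSUP_upper[OF Q]) (use WleK in \<open>auto intro!: bdd_aboveI2\<close>)
      define \<epsilon> where "\<epsilon> = e/3"
      define Bs where "Bs n = {\<omega>\<in>space M. \<exists>m\<ge>n. \<epsilon> < Xs m \<omega>}" for n
      have Bsets: "Bs n \<in> sets M" for n
        unfolding Bs_def using Xm by measurable
      have Bdec: "decseq Bs" unfolding Bs_def by (auto simp: decseq_def intro: order_trans)
      have Bnull: "(\<Inter>i. Bs i) \<in> null_sets M"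
      proof -
        have "(\<Inter>i. Bs i) \<in> sets M" using Bsets by auto
        moreover have "AE \<omega> in M. \<omega> \<notin> (\<Inter>i. Bs i)"
          using AEM
        proof eventually_elim
          case (elim \<omega>)
          then have "(\<lambda>n. Xs n \<omega>) \<longlonglongrightarrow> 0" by blast
          then have "eventually (\<lambda>m. dist (Xs m \<omega>) 0 < \<epsilon>) sequentially"
            by (rule tendstoD) (use e in \<open>simp add: \<epsilon>_def\<close>)
          then obtain n where "\<And>m. m \<ge> n \<Longrightarrow> dist (Xs m \<omega>) 0 < \<epsilon>"
            by (auto simp: eventually_sequentially)
          then have "\<omega> \<notin> Bs n" by (force simp: Bs_def dist_real_def)
          then show ?case by blast
        qed
        ultimately show ?thesis by (simp add: AE_iff_null_sets)
      qed
      define e' where "e' = e/(3*C*(a+1))"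
      have e': "e' > 0" using e C a1 by (simp add: e'_def)
      obtain n0 where n0: "\<And>Q. Q \<in> Qs \<Longrightarrow> measure Q (Bs n0) < e'"
        using unif_decseq[OF Q_prob Q_sets Q_ac rel_compact _ Bdec Bnull e'] Bsets by blast
      have bound: "(\<integral>\<omega>. Xs n \<omega> \<partial>Q) \<le> e/3 + e/3 + e/3" if Q: "Q \<in> Qs" and n: "n \<ge> n0" for n Q
      proof -
        interpret Qp: prob_space Q using Q_prob[OF Q] .
        have BQ: "Bs k \<in> sets Q" for k using Bsets Q_sets[OF Q] by simp
        have sp: "space Q = space M" using Q_sets[OF Q] by (rule sets_eq_imp_space_eq)
        have mB: "measure Q (Bs n) < e'"
          using Qp.finite_measure_mono[of "Bs n" "Bs n0"] BQ decseqD[OF Bdec n] n0[OF Q] by simp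
        have AEb: "AE \<omega> in Q. Xs n \<omega> \<le> \<epsilon> + (C*(a+1)) * indicator (Bs n) \<omega> + (2*C) * W a \<omega>"
          using AEQ[OF Q] AEQ2[OF Q] AE_space[of Q]
        proof eventually_elim
          case (elim \<omega>)
          have x0: "Xs 0 \<omega> \<le> C * (Z \<omega> + 1)" using elim by (metis C_def abs_ge_self order_trans)
          have xn: "Xs n \<omega> \<le> Xs 0 \<omega>" "0 \<le> Xs n \<omega>" using elim by auto
          have Wnn: "0 \<le> W a \<omega>" using a1 by (simp add: W_def)
          show ?case
          proof (cases "Xs n \<omega> \<le> \<epsilon>")
            case True
            moreover have "0 \<le> 2*C*W a \<omega>" "0 \<le> C*(a+1)" using Wnn C a1 by auto
            ultimately show ?thesis by (simp add: indicator_def)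
          next
            case False
            then have inB: "\<omega> \<in> Bs n" using elim sp by (auto simp: Bs_def)
            have eps: "\<epsilon> > 0" using e by (simp add: \<epsilon>_def)
            show ?thesis
            proof (cases "a < Z \<omega>")
              case True
              have h: "C * (Z \<omega> + 1) \<le> C * (2 * Z \<omega>)" using True a1 C by (intro mult_left_mono) auto
              have h2: "0 \<le> C*(a+1)" using C a1 by auto
              have "W a \<omega> = Z \<omega>" "indicator (Bs n) \<omega> = (1::real)" using True inB by (auto simp: W_def)
              then show ?thesis using h h2 xn x0 eps by (simp add: algebra_simps)
            next
              case False
              have "C * (Z \<omega> + 1) \<le> C * (a + 1)" using False C by (intro mult_left_mono) auto
              then show ?thesis using False xn x0 inB eps by (simp add: W_def indicator_def)
            qed
          qed
        qed
        have iB: "integrable Q (indicator (Bs n) :: 'a \<Rightarrow> real)"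
          using BQ by (intro integrable_real_indicator) (auto simp: Qp.emeasure_finite less_top[symmetric])
        have "(\<integral>\<omega>. Xs n \<omega> \<partial>Q) \<le> (\<integral>\<omega>. \<epsilon> + (C*(a+1)) * indicator (Bs n) \<omega> + (2*C) * W a \<omega> \<partial>Q)"
          by (rule integral_mono_AE[OF XintQ[OF Q] _ AEb]) (use iB WintQ[OF Q] in auto)
        also have "\<dots> = \<epsilon> + (C*(a+1)) * measure Q (Bs n) + (2*C) * (\<integral>\<omega>. W a \<omega> \<partial>Q)"
          using iB WintQ[OF Q] BQ by (simp add: Qp.prob_space)
        also have "\<dots> \<le> e/3 + e/3 + e/3"
        proof -
          have "(C*(a+1)) * measure Q (Bs n) \<le> (C*(a+1)) * e'"
            using mB C a1 by (intro mult_left_mono) auto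
          also have "\<dots> = e/3"
          proof -
            have d: "C*(a+1) \<noteq> 0" using C a1 by auto
            have aux: "(D::real) \<noteq> 0 \<Longrightarrow> D*(e/(3*D)) = e/3" for D by (simp add: field_simps)
            show ?thesis using aux[OF d] unfolding e'_def by (simp only: mult.assoc)
          qed
          finally have 1: "(C*(a+1)) * measure Q (Bs n) \<le> e/3" .
          have "(2*C) * (\<integral>\<omega>. W a \<omega> \<partial>Q) \<le> (2*C) * (e/(6*C))"
            using Wrho[OF Q] rhoW C by (intro mult_left_mono) auto
          also have "\<dots> = e/3" using C by simp
          finally have 2: "(2*C) * (\<integral>\<omega>. W a \<omega> \<partial>Q) \<le> e/3" .
          show ?thesis using 1 2 by (simp add: \<epsilon>_def)
        qed
        finally show ?thesis .
      qed
      obtain Q0 where Q0: "Q0 \<in> Qs" using Q_ne by blast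
      have "\<bar>rhoQ Qs (Xs n)\<bar> \<le> e" if n: "n \<ge> n0" for n
      proof -
        have "rhoQ Qs (Xs n) \<le> e"
          unfolding rhoQ_def by (rule cSUP_least[OF Q_ne]) (use bound n in force)
        moreover have "0 \<le> rhoQ Qs (Xs n)"
          unfolding rhoQ_def by (rule cSUP_upper2[OF bddX Q0 XnonnegQ[OF Q0]])
        ultimately show ?thesis by simp
      qed
      then show ?thesis by blast
    qed
    have lim: "(\<lambda>n. rhoQ Qs (Xs n)) \<longlonglongrightarrow> 0"
    proof (rule LIMSEQ_I)
      fix r :: real assume r: "r > 0"
      obtain n0 where "\<forall>n\<ge>n0. \<bar>rhoQ Qs (Xs n)\<bar> \<le> r/2" using key[of "r/2"] r by auto
      then show "\<exists>no. \<forall>n\<ge>no. norm (rhoQ Qs (Xs n) - 0) < r" using r by force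
    qed
    show "decseq (\<lambda>n. rhoQ Qs (Xs n)) \<and> (\<lambda>n. rhoQ Qs (Xs n)) \<longlonglongrightarrow> 0"
      using dec lim by blast
  qed
qed

end
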